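(* For every set $S$, both $\mathbb{H}'_S$ and $\mathbb{H}_S$ are Elgot monads, where for $f\colon X\to T(Y\uplus X)$ (with $T=H'_S$, resp. $T=H_S$) the iteration $f^\dagger\colon X\to TY$ is the least fixpoint of the $\omega$-continuous endomap $g\mapsto[\eta,g]^\star\cdot f$ on the function space $X\to TY$ (ordered pointwise by $\sqsubseteq$).
   Context: Trajectories over $S$: pairs $\langle I,e\rangle$ with $e\colon I\to S$ and $I$ an interval $[0,d]$ ($d\in\mathbb{R}_{\ge0}$) or $[0,d)$ ($d\in\mathbb{R}_{\ge0}\cup\{\infty\}$). Let $H'_SX=\sum_{d\in\mathbb{R}_{\ge0}}S^{[0,d)}\times X\ \cup\ \sum_{d\in\mathbb{R}_{\ge0}\cup\{\infty\}}S^{[0,d)}$ and $H_SX=\sum_{d\in\mathbb{R}_{\ge0}}S^{[0,d)}\times X\ \cup\ \sum_{I}S^{I}$ with $I$ ranging over all intervals $[0,d]$ ($d\in\mathbb{R}_{\ge0}$) and $[0,d)$ ($d\in\mathbb{R}_{\ge0}\cup\{\infty\}$); elements are written $\langle I,e,x\rangle$ (first summand) and $\langle I,e\rangle$ (second summand). Concatenation: $\langle[0,d_1),e_1\rangle\frown\langle J,e_2\rangle=\langle J',\lambda t.\,\text{if }t<d_1\text{ then }e_1(t)\text{ else }e_2(t-d_1)\rangle$, $J'=[0,d_1+d_2)$ if $J=[0,d_2)$, $J'=[0,d_1+d_2]$ if $J=[0,d_2]$. Monad structure (for both $T=H'_S,H_S$): $\eta(x)=\langle\emptyset,!,x\rangle$;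 for $f\colon X\to TY$: $f^\star\langle I,e,x\rangle=\langle (I,e)\frown(J,e'),y\rangle$ if $f(x)=\langle J,e',y\rangle$, $f^\star\langle I,e,x\rangle=(I,e)\frown(J,e')$ if $f(x)=\langle J,e'\rangle$, $f^\star\langle I,e\rangle=\langle I,e\rangle$. These define monads $\mathbb{H}'_S,\mathbb{H}_S$. Order $\sqsubseteq$ on $TY$: $a\sqsubseteq b$ iff $a=b$, or $a=\langle I,e\rangle$ and $b\in\{\langle I',e'\rangle,\langle I',e',y\rangle\}$ with $I\subseteq I'$ and $e=e'|_I$. An Elgot monad is a monad $\mathbb{T}$ with an operator sending $f\colon X\to T(Y\uplus X)$ to $f^\dagger\colon X\to TY$ satisfying the standard Elgot iteration axioms: fixpoint $[\eta,f^\dagger]^\star\cdot f=f^\dagger$; naturality $g^\star\cdot f^\dagger=([T\mathsf{inl}\cdot g,\eta\cdot\mathsf{inr}]^\star\cdot f)^\dagger$; codiagonal $(T[\mathsf{id},\mathsf{inr}]\cdot f)^\dagger=(f^\dagger)^\dagger$ for $f\colon X\to T((Y\uplus X)\uplus X)$; uniformity: $f\cdot h=T(\mathsf{id}\uplus h)\cdot g$ implies $f^\dagger\cdot h=g^\dagger$. *)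

theory Defs
  imports Complex_Main
begin

(* Trajectories over S: a trajectory <I,e> with e : I -> S is represented by a partial
   map e :: real => 's option with dom e = I (so I is determined by e) and ran e \<subseteq> S. *)

datatype ('s, 'x) trj = Ret "real \<Rightarrow> 's option" 'x | Div "real \<Rightarrow> 's option"

definition fin_open :: "real set \<Rightarrow> bool" where
  "fin_open I \<longleftrightarrow> (\<exists>d\<ge>0. I = {0..<d})"

definition half_open :: "real set \<Rightarrow> bool" where
  "half_open I \<longleftrightarrow> fin_open I \<or> I = {0..}"

definition interval :: "real set \<Rightarrow> bool" where
  "interval I \<longleftrightarrow> half_open I \<or> (\<exists>d\<ge>0. I = {0..d})"

(* which of the two monads: Prime = H'_S, Full = H_S *)
datatype variant = Prime | Full

definition Hc :: "variant \<Rightarrow> 's set \<Rightarrow> ('s, 'x) trj set" where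
  "Hc k S =
     {Ret e x | e x. fin_open (dom e) \<and> ran e \<subseteq> S} \<union>
     {Div e | e. (if k = Prime then half_open (dom e) else interval (dom e)) \<and> ran e \<subseteq> S}"

definition len :: "(real \<Rightarrow> 's option) \<Rightarrow> real" where
  "len e = (THE d. d \<ge> 0 \<and> dom e = {0..<d})"

definition cat :: "(real \<Rightarrow> 's option) \<Rightarrow> (real \<Rightarrow> 's option) \<Rightarrow> (real \<Rightarrow> 's option)" where
  "cat e1 e2 = (\<lambda>t. if t < len e1 then e1 t else e2 (t - len e1))"

definition eta :: "'x \<Rightarrow> ('s, 'x) trj" where
  "eta x = Ret Map.empty x"

fun kstar :: "('x \<Rightarrow> ('s, 'y) trj) \<Rightarrow> ('s, 'x) trj \<Rightarrow> ('s, 'y) trj" where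
  "kstar f (Ret e x) = (case f x of Ret e' y \<Rightarrow> Ret (cat e e') y | Div e' \<Rightarrow> Div (cat e e'))"
| "kstar f (Div e) = Div e"

definition Tmap :: "('x \<Rightarrow> 'y) \<Rightarrow> ('s, 'x) trj \<Rightarrow> ('s, 'y) trj" where
  "Tmap h = kstar (eta \<circ> h)"

definition le :: "('s, 'y) trj \<Rightarrow> ('s, 'y) trj \<Rightarrow> bool" where
  "le a b \<longleftrightarrow> a = b \<or>
     (\<exists>e. a = Div e \<and> (\<exists>e'. (b = Div e' \<or> (\<exists>y. b = Ret e' y)) \<and> e \<subseteq>\<^sub>m e'))"

definition fle :: "('x \<Rightarrow> ('s, 'y) trj) \<Rightarrow> ('x \<Rightarrow> ('s, 'y) trj) \<Rightarrow> bool" where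
  "fle g h \<longleftrightarrow> (\<forall>x. le (g x) (h x))"

definition Fun :: "variant \<Rightarrow> 's set \<Rightarrow> ('x \<Rightarrow> ('s, 'y) trj) set" where
  "Fun k S = {g. \<forall>x. g x \<in> Hc k S}"

definition is_lub :: "variant \<Rightarrow> 's set \<Rightarrow> ('x \<Rightarrow> ('s, 'y) trj) set \<Rightarrow> ('x \<Rightarrow> ('s, 'y) trj) \<Rightarrow> bool" where
  "is_lub k S C g \<longleftrightarrow> g \<in> Fun k S \<and> (\<forall>c\<in>C. fle c g) \<and>
     (\<forall>h\<in>Fun k S. (\<forall>c\<in>C. fle c h) \<longrightarrow> fle g h)"

definition Phi :: "('x \<Rightarrow> ('s, 'y + 'x) trj) \<Rightarrow> ('x \<Rightarrow> ('s, 'y) trj) \<Rightarrow> ('x \<Rightarrow> ('s, 'y) trj)" where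
  "Phi f g = (\<lambda>x. kstar (case_sum eta g) (f x))"

definition omega_continuous :: "variant \<Rightarrow> 's set \<Rightarrow> (('x \<Rightarrow> ('s, 'y) trj) \<Rightarrow> ('x \<Rightarrow> ('s, 'y) trj)) \<Rightarrow> bool" where
  "omega_continuous k S F \<longleftrightarrow>
     (\<forall>g\<in>Fun k S. F g \<in> Fun k S) \<and>
     (\<forall>g\<in>Fun k S. \<forall>h\<in>Fun k S. fle g h \<longrightarrow> fle (F g) (F h)) \<and>
     (\<forall>c :: nat \<Rightarrow> ('x \<Rightarrow> ('s, 'y) trj). \<forall>g.
        (\<forall>n. c n \<in> Fun k S) \<and> (\<forall>n. fle (c n) (c (Suc n))) \<and> is_lub k S (range c) g
        \<longrightarrow> is_lub k S (range (F \<circ> c)) (F g))"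

definition is_lfp :: "variant \<Rightarrow> 's set \<Rightarrow> ('x \<Rightarrow> ('s, 'y + 'x) trj) \<Rightarrow> ('x \<Rightarrow> ('s, 'y) trj) \<Rightarrow> bool" where
  "is_lfp k S f g \<longleftrightarrow> g \<in> Fun k S \<and> Phi f g = g \<and>
     (\<forall>h\<in>Fun k S. Phi f h = h \<longrightarrow> fle g h)"

definition dagger :: "variant \<Rightarrow> 's set \<Rightarrow> ('x \<Rightarrow> ('s, 'y + 'x) trj) \<Rightarrow> ('x \<Rightarrow> ('s, 'y) trj)" where
  "dagger k S f = (THE g. is_lfp k S f g)"

end

theory Submission
  imports Defs
begin

fun tm :: "('s,'x) trj \<Rightarrow> real \<Rightarrow> 's option" where
  "tm (Ret e x) = e" | "tm (Div e) = e"

definition isR :: "('s,'x) trj \<Rightarrow> bool" where "isR a \<longleftrightarrow> (\<exists>e x. a = Ret e x)"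

lemma isR_simps[simp]: "isR (Ret e x)" "\<not> isR (Div e)" by (auto simp: isR_def)

lemma le_Ret[simp]: "le (Ret e x) b \<longleftrightarrow> b = Ret e x" by (auto simp: le_def)
lemma le_Div[simp]: "le (Div e) b \<longleftrightarrow> e \<subseteq>\<^sub>m tm b"
  by (cases b) (auto simp: le_def map_le_def)

lemma le_refl[simp]: "le a a" by (simp add: le_def)

lemma le_tm: "le a b \<Longrightarrow> tm a \<subseteq>\<^sub>m tm b"
  by (cases a) auto

lemma le_trans: "le a b \<Longrightarrow> le b c \<Longrightarrow> le a c"
  by (cases a; cases b) (auto dest: le_tm intro: map_le_trans)

lemma le_antisym: "le a b \<Longrightarrow> le b a \<Longrightarrow> a = b"
  by (cases a; cases b) (auto intro: map_le_antisym)

lemma len_eq: assumes "dom e = {0..<d}" "d \<ge> 0" shows "len e = d"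
  unfolding len_def
proof (rule the_equality)
  fix d' assume "d' \<ge> 0 \<and> dom e = {0..<d'}"
  then have h: "{0..<d} = {0..<d'}" "d' \<ge> 0" using assms by auto
  show "d' = d"
  proof (rule ccontr)
    assume "d' \<noteq> d"
    then consider "d < d'" | "d' < d" by linarith
    then show False
    proof cases
      case 1 then have "d \<in> {0..<d'}" using assms by auto
      then show False using h by auto
    next
      case 2 then have "d' \<in> {0..<d}" using h by auto
      then show False using h by auto
    qed
  qed
qed (use assms in auto)

lemma fin_open_len: "fin_open (dom e) \<Longrightarrow> dom e = {0..<len e} \<and> len e \<ge> 0"
  unfolding fin_open_def using len_eq by metis

lemma len_empty[simp]: "len Map.empty = 0"
  by (rule len_eq) auto

lemma dom_cat: assumes "fin_open (dom e)"
  shows "dom (cat e e') = {0..<len e} \<union> {t. len e \<le> t \<and> t - len e \<in> dom e'}"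
  using fin_open_len[OF assms] unfolding cat_def by (auto simp: dom_def split: if_splits)

lemma ran_cat: "ran (cat e e') \<subseteq> ran e \<union> ran e'"
  unfolding cat_def ran_def by (auto split: if_splits)

lemma cat_empty_left: assumes "dom e' \<subseteq> {0..}" shows "cat Map.empty e' = e'"
proof (rule ext)
  fix t show "cat Map.empty e' t = e' t"
  proof (cases "t < 0")
    case True then have "t \<notin> dom e'" using assms by auto
    then have "e' t = None" by (simp add: domIff)
    then show ?thesis using True by (auto simp: cat_def)
  qed (auto simp: cat_def)
qed

lemma cat_empty_right: assumes "fin_open (dom e)" shows "cat e Map.empty = e"
proof (rule ext)
  fix t show "cat e Map.empty t = e t"
  proof (cases "t < len e")
    case False then have "t \<notin> dom e" using fin_open_len[OF assms] by auto
    then have "e t = None" by (simp add: domIff)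
    then show ?thesis using False by (auto simp: cat_def)
  qed (auto simp: cat_def)
qed

lemma map_le_cat: "fin_open (dom e) \<Longrightarrow> e \<subseteq>\<^sub>m cat e e'"
  using fin_open_len[of e] unfolding cat_def map_le_def by force

lemma cat_mono: "e1 \<subseteq>\<^sub>m e2 \<Longrightarrow> cat e e1 \<subseteq>\<^sub>m cat e e2"
  unfolding cat_def map_le_def by (auto simp: dom_def split: if_splits)

lemma dom_cat_fin: assumes "fin_open (dom e)" "fin_open (dom e')"
  shows "dom (cat e e') = {0..<len e + len e'}"
  using dom_cat[OF assms(1), of e'] fin_open_len[OF assms(1)] fin_open_len[OF assms(2)]
  by auto

lemma fin_open_cat: assumes "fin_open (dom e)" "fin_open (dom e')"
  shows "fin_open (dom (cat e e'))" and "len (cat e e') = len e + len e'"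
  using dom_cat_fin[OF assms] fin_open_len[OF assms(1)] fin_open_len[OF assms(2)]
  by (auto simp: fin_open_def intro!: len_eq exI[of _ "len e + len e'"])

lemma cat_assoc: assumes "fin_open (dom e1)" "fin_open (dom e2)"
  shows "cat (cat e1 e2) e3 = cat e1 (cat e2 e3)"
  using fin_open_cat(2)[OF assms] fin_open_len[OF assms(2)] unfolding cat_def by (auto intro!: ext simp: algebra_simps)

definition okD :: "variant \<Rightarrow> real set \<Rightarrow> bool" where
  "okD k I = (if k = Prime then half_open I else interval I)"

lemma Ret_Hc[simp]: "Ret e x \<in> Hc k S \<longleftrightarrow> fin_open (dom e) \<and> ran e \<subseteq> S"
  by (auto simp: Hc_def)
lemma Div_Hc[simp]: "Div e \<in> Hc k S \<longleftrightarrow> okD k (dom e) \<and> ran e \<subseteq> S"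
  by (auto simp: Hc_def okD_def)

lemma okD_nonneg: "okD k I \<Longrightarrow> I \<subseteq> {0..}"
  by (auto simp: okD_def half_open_def interval_def fin_open_def split: if_splits)

lemma fin_open_nonneg: "fin_open I \<Longrightarrow> I \<subseteq> {0..}"
  by (auto simp: fin_open_def)

lemma Hc_nonneg: "a \<in> Hc k S \<Longrightarrow> dom (tm a) \<subseteq> {0..}"
  by (cases a) (auto dest!: okD_nonneg fin_open_nonneg)

lemma okD_cat: assumes "fin_open (dom e)" "okD k (dom e')"
  shows "okD k (dom (cat e e'))"
proof -
  have L: "dom e = {0..<len e}" "len e \<ge> 0" using fin_open_len[OF assms(1)] by auto
  have D: "dom (cat e e') = {0..<len e} \<union> {t. len e \<le> t \<and> t - len e \<in> dom e'}"
    by (rule dom_cat[OF assms(1)])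
  have c1: "dom (cat e e') = {0..<len e + d}" if "dom e' = {0..<d}" "d \<ge> 0" for d
    unfolding D that(1) using L that(2) by auto
  have c2: "dom (cat e e') = {0..len e + d}" if "dom e' = {0..d}" "d \<ge> 0" for d
    unfolding D that(1) using L that(2) by auto
  have c3: "dom (cat e e') = {0..}" if "dom e' = {0..}"
    unfolding D that using L by auto
  from assms(2) consider (a) d where "dom e' = {0..<d}" "d \<ge> 0" | (b) "dom e' = {0..}"
    | (c) d where "dom e' = {0..d}" "d \<ge> 0" "k \<noteq> Prime"
    unfolding okD_def half_open_def interval_def fin_open_def by (auto split: if_splits)
  then show ?thesis
  proof cases
    case (a d)
    have "fin_open (dom (cat e e'))" unfolding fin_open_def using c1[OF a] a L
      by (intro exI[of _ "len e + d"]) auto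
    then show ?thesis by (simp add: okD_def half_open_def interval_def)
  next
    case b then show ?thesis using c3 by (simp add: okD_def half_open_def interval_def)
  next
    case (c d) then show ?thesis using c2[OF c(1,2)] L
      by (simp add: okD_def interval_def)
  qed
qed

lemma Fun_iff: "f \<in> Fun k S \<longleftrightarrow> (\<forall>x. f x \<in> Hc k S)"
  by (simp add: Fun_def)

lemma fin_open_empty[simp]: "fin_open {}"
  unfolding fin_open_def by (auto intro!: exI[of _ 0])

lemma eta_Hc[simp]: "eta x \<in> Hc k S"
  by (simp add: eta_def)

lemma okD_fin_open: "fin_open I \<Longrightarrow> okD k I"
  by (simp add: okD_def half_open_def interval_def)

lemma kstar_Hc: assumes "f \<in> Fun k S" "a \<in> Hc k S" shows "kstar f a \<in> Hc k S"
proof (cases a)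
  case (Ret e x)
  then have a: "fin_open (dom e)" "ran e \<subseteq> S" using assms by auto
  show ?thesis
  proof (cases "f x")
    case (Ret e' y)
    moreover have "f x \<in> Hc k S" using assms(1) by (simp add: Fun_iff)
    ultimately have "fin_open (dom e')" "ran e' \<subseteq> S" by auto
    then show ?thesis using Ret \<open>a = _\<close> a fin_open_cat ran_cat[of e e'] by auto
  next
    case (Div e')
    moreover have "f x \<in> Hc k S" using assms(1) by (simp add: Fun_iff)
    ultimately have "okD k (dom e')" "ran e' \<subseteq> S" by auto
    then show ?thesis using Div \<open>a = _\<close> a okD_cat ran_cat[of e e'] by auto
  qed
qed (use assms in auto)

lemma kstar_eta_left: assumes "f x \<in> Hc k S" shows "kstar f (eta x) = f x"
proof -
  have "dom (tm (f x)) \<subseteq> {0..}" using Hc_nonneg[OF assms] .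
  then show ?thesis by (cases "f x") (auto simp: eta_def cat_empty_left)
qed

lemma kstar_eta_right: "a \<in> Hc k S \<Longrightarrow> kstar eta a = a"
  by (cases a) (auto simp: eta_def cat_empty_right)

lemma kstar_assoc: assumes "f \<in> Fun k S" "a \<in> Hc k S"
  shows "kstar g (kstar f a) = kstar (kstar g \<circ> f) a"
proof (cases a)
  case (Ret e x)
  then have a: "fin_open (dom e)" using assms by auto
  show ?thesis
  proof (cases "f x")
    case (Ret e' y)
    then have "fin_open (dom e')" using assms(1) by (auto simp: Fun_iff dest: spec[of _ x])
    then show ?thesis using Ret \<open>a = _\<close> a by (cases "g y") (auto simp: cat_assoc)
  next
    case (Div e')
    then show ?thesis using \<open>a = _\<close> by auto
  qed
qed auto

lemma Tmap_Ret: "fin_open (dom e) \<Longrightarrow> Tmap \<phi> (Ret e x) = Ret e (\<phi> x)"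
  by (simp add: Tmap_def eta_def cat_empty_right)
lemma Tmap_Div[simp]: "Tmap \<phi> (Div e) = Div e"
  by (simp add: Tmap_def)

lemma Tmap_Hc: "a \<in> Hc k S \<Longrightarrow> Tmap \<phi> a \<in> Hc k S"
  by (cases a) (auto simp: Tmap_Ret)

lemma kstar_Tmap: "a \<in> Hc k S \<Longrightarrow> kstar F (Tmap \<phi> a) = kstar (F \<circ> \<phi>) a"
  by (cases a) (auto simp: Tmap_Ret)

lemma kstar_mono: assumes "le a b" "b \<in> Hc k S" shows "le (kstar g a) (kstar g b)"
proof (cases "a = b")
  case False
  then obtain e where a: "a = Div e" "e \<subseteq>\<^sub>m tm b" using assms(1) by (cases a) auto
  show ?thesis
  proof (cases b)
    case (Ret e' y)
    then have "fin_open (dom e')" using assms by auto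
    then have "e' \<subseteq>\<^sub>m cat e' e''" for e'' by (rule map_le_cat)
    then show ?thesis using a Ret by (cases "g y") (auto intro: map_le_trans)
  qed (use a in auto)
qed simp

lemma case_sum_Fun: "g \<in> Fun k S \<Longrightarrow> h \<in> Fun k S \<Longrightarrow> case_sum g h \<in> Fun k S"
  by (auto simp: Fun_iff split: sum.splits)

lemma eta_Fun[simp]: "eta \<in> Fun k S"
  by (simp add: Fun_iff)

lemma comp_Fun: "g \<in> Fun k S \<Longrightarrow> g \<circ> h \<in> Fun k S"
  by (simp add: Fun_iff)

lemma kstar_comp_Fun: "g \<in> Fun k S \<Longrightarrow> f \<in> Fun k S \<Longrightarrow> kstar g \<circ> f \<in> Fun k S"
  by (simp add: Fun_iff kstar_Hc)

lemma Tmap_comp_Fun: "f \<in> Fun k S \<Longrightarrow> Tmap h \<circ> f \<in> Fun k S"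
  by (simp add: Fun_iff Tmap_Hc)

definition U :: "(nat \<Rightarrow> real \<Rightarrow> 's option) \<Rightarrow> real \<Rightarrow> 's option" where
  "U m t = (if \<exists>n. m n t \<noteq> None then m (SOME n. m n t \<noteq> None) t else None)"

definition compat :: "(nat \<Rightarrow> real \<Rightarrow> 's option) \<Rightarrow> bool" where
  "compat m \<longleftrightarrow> (\<forall>n n' t a b. m n t = Some a \<longrightarrow> m n' t = Some b \<longrightarrow> a = b)"

lemma U_None: "U m t = None \<longleftrightarrow> (\<forall>n. m n t = None)"
proof (cases "\<exists>n. m n t \<noteq> None")
  case True
  then have "m (SOME n. m n t \<noteq> None) t \<noteq> None" by (rule someI_ex)
  then show ?thesis using True unfolding U_def by auto
qed (auto simp: U_def)

lemma U_Some: assumes "compat m" shows "U m t = Some a \<longleftrightarrow> (\<exists>n. m n t = Some a)"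
proof
  assume h: "U m t = Some a"
  then have ex: "\<exists>n. m n t \<noteq> None" using U_None[of m t] by auto
  then have "U m t = m (SOME n. m n t \<noteq> None) t" unfolding U_def by (rule if_P)
  then show "\<exists>n. m n t = Some a" using h by metis
next
  assume "\<exists>n. m n t = Some a"
  then obtain n where n: "m n t = Some a" by blast
  then have ex: "\<exists>n. m n t \<noteq> None" by auto
  then obtain b where b: "m (SOME n. m n t \<noteq> None) t = Some b"
    using someI_ex[OF ex] by auto
  then have "b = a" using assms n unfolding compat_def by blast
  then show "U m t = Some a" using ex b unfolding U_def by simp
qed

lemma map_le_U: assumes "compat m" shows "m n \<subseteq>\<^sub>m U m"
  unfolding map_le_def
proof
  fix t assume "t \<in> dom (m n)"
  then obtain a where "m n t = Some a" by auto
  then show "m n t = U m t" using U_Some[OF assms] by metis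
qed

lemma U_le: assumes "compat m" "\<And>n. m n \<subseteq>\<^sub>m e" shows "U m \<subseteq>\<^sub>m e"
  unfolding map_le_def
proof safe
  fix t y assume "U m t = Some y"
  then obtain n where "m n t = Some y" using U_Some[OF assms(1)] by blast
  then have "e t = Some y" using assms(2)[of n] unfolding map_le_def by (metis domI)
  then show "U m t = e t" using \<open>U m t = Some y\<close> by simp
qed

lemma dom_U: "dom (U m) = (\<Union>n. dom (m n))"
  by (rule set_eqI) (simp add: domIff U_None)

lemma ran_U: assumes "compat m" shows "ran (U m) \<subseteq> (\<Union>n. ran (m n))"
  unfolding ran_def by (auto simp: U_Some[OF assms])

definition chainT :: "(nat \<Rightarrow> ('s,'y) trj) \<Rightarrow> bool" where
  "chainT c \<longleftrightarrow> (\<forall>n. le (c n) (c (Suc n)))"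

lemma chainT_le: assumes "chainT c" "n \<le> m" shows "le (c n) (c m)"
  using assms(2)
proof (induction m rule: dec_induct)
  case (step m) then show ?case using assms(1) le_trans unfolding chainT_def by blast
qed simp

lemma chainT_compat: assumes "chainT c" shows "compat (\<lambda>n. tm (c n))"
  unfolding compat_def
proof safe
  fix n n' t a b assume h: "tm (c n) t = Some a" "tm (c n') t = Some b"
  have "tm (c n) \<subseteq>\<^sub>m tm (c n') \<or> tm (c n') \<subseteq>\<^sub>m tm (c n)"
    using chainT_le[OF assms, of n n'] chainT_le[OF assms, of n' n] le_tm by (cases "n \<le> n'") auto
  then show "a = b" using h unfolding map_le_def by (metis domI option.inject)
qed

definition lubT :: "(nat \<Rightarrow> ('s,'y) trj) \<Rightarrow> ('s,'y) trj" where
  "lubT c = (if \<exists>n. isR (c n) then c (SOME n. isR (c n)) else Div (U (\<lambda>n. tm (c n))))"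

lemma chainT_Ret_eq: assumes "chainT c" "isR (c n)" "isR (c m)" shows "c n = c m"
proof (cases "n \<le> m")
  case True then show ?thesis using chainT_le[OF assms(1) True] assms(2) by (auto simp: isR_def)
next
  case False then show ?thesis using chainT_le[OF assms(1), of m n] assms(3) by (auto simp: isR_def)
qed

lemma lubT_Ret: assumes "chainT c" "isR (c n)" shows "lubT c = c n"
proof -
  have "isR (c (SOME n. isR (c n)))" using assms(2) by (rule someI)
  then show ?thesis using assms chainT_Ret_eq unfolding lubT_def by auto
qed

lemma lubT_Div: "\<not> (\<exists>n. isR (c n)) \<Longrightarrow> lubT c = Div (U (\<lambda>n. tm (c n)))"
  unfolding lubT_def by auto

lemma notR: "\<not> isR a \<Longrightarrow> a = Div (tm a)"
  by (cases a) auto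

lemma lubT_ub: assumes "chainT c" shows "le (c n) (lubT c)"
proof (cases "\<exists>j. isR (c j)")
  case True
  then obtain j where j: "isR (c j)" by blast
  show ?thesis
  proof (cases "n \<le> j")
    case True then show ?thesis using chainT_le[OF assms True] lubT_Ret[OF assms j] by simp
  next
    case False
    then have "le (c j) (c n)" using chainT_le[OF assms] by simp
    then have "c n = c j" using j by (auto simp: isR_def)
    then show ?thesis using lubT_Ret[OF assms j] by simp
  qed
next
  case False
  obtain e where e: "c n = Div e" using False by (cases "c n") (auto dest: spec[of _ n])
  have "tm (c n) \<subseteq>\<^sub>m U (\<lambda>n. tm (c n))" by (rule map_le_U[OF chainT_compat[OF assms]])
  then show ?thesis using e lubT_Div[OF False] by simp
qed

lemma lubT_least: assumes "chainT c" "\<And>n. le (c n) b" shows "le (lubT c) b"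
proof (cases "\<exists>j. isR (c j)")
  case True
  then obtain j where j: "isR (c j)" by blast
  then show ?thesis using lubT_Ret[OF assms(1) j] assms(2) by simp
next
  case False
  have "tm (c n) \<subseteq>\<^sub>m tm b" for n using assms(2)[of n] le_tm by auto
  then show ?thesis using lubT_Div[OF False] U_le[OF chainT_compat[OF assms(1)]] by simp
qed


definition dc :: "real set \<Rightarrow> bool" where
  "dc D \<longleftrightarrow> D \<subseteq> {0..} \<and> (\<forall>t\<in>D. \<forall>s. 0 \<le> s \<and> s \<le> t \<longrightarrow> s \<in> D)"

definition otop :: "real set \<Rightarrow> bool" where
  "otop D \<longleftrightarrow> (\<forall>t\<in>D. \<exists>t'\<in>D. t < t')"

lemma fin_open_dc: "fin_open I \<Longrightarrow> dc I"
  by (auto simp: fin_open_def dc_def)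

lemma okD_dc: "okD k I \<Longrightarrow> dc I"
  by (auto simp: okD_def half_open_def interval_def fin_open_def dc_def split: if_splits)

lemma half_open_otop: assumes "half_open I" shows "otop I"
  using assms unfolding half_open_def fin_open_def otop_def
proof (elim disjE exE conjE)
  fix d assume I: "I = {0..<d}"
  show "\<forall>t\<in>I. \<exists>t'\<in>I. t < t'"
  proof
    fix t assume "t \<in> I" then show "\<exists>t'\<in>I. t < t'" using I by (intro bexI[of _ "(t + d)/2"]) auto
  qed
next
  assume I: "I = {0..}"
  show "\<forall>t\<in>I. \<exists>t'\<in>I. t < t'"
  proof
    fix t assume "t \<in> I" then show "\<exists>t'\<in>I. t < t'" using I by (intro bexI[of _ "t + 1"]) auto
  qed
qed

lemma dc_Union: "(\<And>n. dc (I n)) \<Longrightarrow> dc (\<Union>n. I n)"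
  unfolding dc_def by blast

lemma otop_Union: "(\<And>n. otop (I n)) \<Longrightarrow> otop (\<Union>n. I n)"
  unfolding otop_def by blast

lemma dc_interval: assumes "dc D" shows "interval D" "otop D \<Longrightarrow> half_open D"
proof -
  have D0: "D \<subseteq> {0..}" and Dd: "\<And>t s. t \<in> D \<Longrightarrow> 0 \<le> s \<Longrightarrow> s \<le> t \<Longrightarrow> s \<in> D"
    using assms unfolding dc_def by auto
  have "half_open D \<or> (\<exists>d\<ge>0. D = {0..d} \<and> \<not> otop D)"
  proof (cases "D = {}")
    case True then show ?thesis unfolding half_open_def fin_open_def by (auto intro!: exI[of _ 0])
  next
    case ne: False
    show ?thesis
    proof (cases "bdd_above D")
      case False
      have "D = {0..}"
      proof
        show "{0..} \<subseteq> D"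
        proof
          fix s :: real assume "s \<in> {0..}"
          from False obtain t where "t \<in> D" "s < t" unfolding bdd_above_def by (meson not_le)
          then show "s \<in> D" using Dd \<open>s \<in> {0..}\<close> by auto
        qed
      qed (use D0 in auto)
      then show ?thesis unfolding half_open_def by simp
    next
      case True
      define \<sigma> where "\<sigma> = Sup D"
      have up: "t \<le> \<sigma>" if "t \<in> D" for t using cSup_upper[OF that True] \<sigma>_def by simp
      obtain t0 where "t0 \<in> D" using ne by auto
      then have s0: "\<sigma> \<ge> 0" using up D0 by force
      have low: "r \<in> D" if r: "0 \<le> r" "r < \<sigma>" for r
      proof -
        obtain t where "t \<in> D" "r < t" using less_cSup_iff[OF ne True] r \<sigma>_def by auto
        then show ?thesis using Dd r by auto
      qed
      show ?thesis
      proof (cases "\<sigma> \<in> D")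
        case True
        have "D = {0..\<sigma>}"
        proof
          show "D \<subseteq> {0..\<sigma>}" using up D0 by auto
          show "{0..\<sigma>} \<subseteq> D"
          proof
            fix r assume r: "r \<in> {0..\<sigma>}"
            show "r \<in> D"
            proof (cases "r = \<sigma>")
              case False then show ?thesis using r low by auto
            qed (use True in simp)
          qed
        qed
        moreover have "\<not> otop D" using True up unfolding otop_def by (meson not_le)
        ultimately show ?thesis using s0 by auto
      next
        case False
        have "D = {0..<\<sigma>}"
        proof
          show "D \<subseteq> {0..<\<sigma>}"
          proof
            fix t assume t: "t \<in> D"
            then have "t \<noteq> \<sigma>" using False by auto
            then show "t \<in> {0..<\<sigma>}" using up[OF t] D0 t by auto
          qed
          show "{0..<\<sigma>} \<subseteq> D" using low by auto
        qed
        then show ?thesis using s0 unfolding half_open_def fin_open_def by auto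
      qed
    qed
  qed
  then show "interval D" "otop D \<Longrightarrow> half_open D" unfolding interval_def by auto
qed

lemma okD_Union: assumes "\<And>n. okD k (I n)" shows "okD k (\<Union>n. I n)"
proof (cases "k = Prime")
  case True
  then have "half_open (I n)" for n using assms[of n] by (simp add: okD_def)
  then have "dc (\<Union>n. I n)" "otop (\<Union>n. I n)" using okD_dc[OF assms] half_open_otop
    by (auto intro: dc_Union otop_Union)
  then show ?thesis using dc_interval True by (simp add: okD_def)
next
  case False
  have "dc (\<Union>n. I n)" using okD_dc[OF assms] by (auto intro: dc_Union)
  then show ?thesis using dc_interval False by (simp add: okD_def)
qed

lemma lubT_Hc: assumes "chainT c" "\<And>n. c n \<in> Hc k S" shows "lubT c \<in> Hc k S"
proof (cases "\<exists>j. isR (c j)")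
  case True
  then obtain j where j: "isR (c j)" by blast
  then show ?thesis using lubT_Ret[OF assms(1) j] assms(2) by simp
next
  case False
  have cn: "c n = Div (tm (c n))" for n using False by (cases "c n") (auto dest: spec[of _ n])
  have ok: "okD k (dom (tm (c n)))" "ran (tm (c n)) \<subseteq> S" for n
    using assms(2)[of n] by (subst (asm) cn; simp)+
  have "okD k (dom (U (\<lambda>n. tm (c n))))" unfolding dom_U by (rule okD_Union) (rule ok)
  moreover have "ran (U (\<lambda>n. tm (c n))) \<subseteq> S" using ran_U[OF chainT_compat[OF assms(1)]] ok(2) by blast
  ultimately show ?thesis using lubT_Div[OF False] by simp
qed


lemma fle_refl[simp]: "fle g g" by (simp add: fle_def)
lemma fle_trans: "fle f g \<Longrightarrow> fle g h \<Longrightarrow> fle f h" unfolding fle_def by (metis le_trans)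
lemma fle_antisym: "fle f g \<Longrightarrow> fle g f \<Longrightarrow> f = g" unfolding fle_def by (rule ext) (metis le_antisym)

definition Lub :: "(nat \<Rightarrow> 'x \<Rightarrow> ('s,'y) trj) \<Rightarrow> 'x \<Rightarrow> ('s,'y) trj" where
  "Lub c = (\<lambda>x. lubT (\<lambda>n. c n x))"

definition fchain :: "(nat \<Rightarrow> 'x \<Rightarrow> ('s,'y) trj) \<Rightarrow> bool" where
  "fchain c \<longleftrightarrow> (\<forall>n. fle (c n) (c (Suc n)))"

lemma fchain_chainT: "fchain c \<Longrightarrow> chainT (\<lambda>n. c n x)"
  by (simp add: fchain_def chainT_def fle_def)

lemma Lub_ub: assumes "fchain c" shows "fle (c n) (Lub c)"
  unfolding fle_def Lub_def
proof
  fix x show "le (c n x) (lubT (\<lambda>n. c n x))" by (rule lubT_ub[OF fchain_chainT[OF assms]])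
qed

lemma Lub_least: assumes "fchain c" "\<And>n. fle (c n) h" shows "fle (Lub c) h"
  unfolding fle_def Lub_def
proof
  fix x show "le (lubT (\<lambda>n. c n x)) (h x)"
    by (rule lubT_least[OF fchain_chainT[OF assms(1)]]) (use assms(2) in \<open>simp add: fle_def\<close>)
qed

lemma Lub_Fun: assumes "fchain c" "\<And>n. c n \<in> Fun k S" shows "Lub c \<in> Fun k S"
  unfolding Fun_iff Lub_def
proof
  fix x show "lubT (\<lambda>n. c n x) \<in> Hc k S"
    by (rule lubT_Hc[OF fchain_chainT[OF assms(1)]]) (use assms(2) in \<open>simp add: Fun_iff\<close>)
qed

lemma Lub_is_lub: assumes "fchain c" "\<And>n. c n \<in> Fun k S" shows "is_lub k S (range c) (Lub c)"
proof (unfold is_lub_def, intro conjI ballI impI)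
  show "Lub c \<in> Fun k S" by (rule Lub_Fun[OF assms])
  fix c' assume "c' \<in> range c" then obtain n where "c' = c n" by auto
  then show "fle c' (Lub c)" using Lub_ub[OF assms(1)] by simp
next
  fix h assume "\<forall>c'\<in>range c. fle c' h" then show "fle (Lub c) h" by (intro Lub_least[OF assms(1)]) auto
qed

lemma is_lub_unique: assumes "is_lub k S C g" "is_lub k S C h" shows "g = h"
proof -
  have "fle g h" using assms unfolding is_lub_def by blast
  moreover have "fle h g" using assms unfolding is_lub_def by blast
  ultimately show ?thesis by (rule fle_antisym)
qed

lemma Lub_shift: assumes "fchain c" shows "Lub (\<lambda>n. c (Suc n)) = Lub c"
proof (rule fle_antisym)
  have "fchain (\<lambda>n. c (Suc n))" using assms by (simp add: fchain_def)
  then show "fle (Lub (\<lambda>n. c (Suc n))) (Lub c)" by (rule Lub_least) (rule Lub_ub[OF assms])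
  show "fle (Lub c) (Lub (\<lambda>n. c (Suc n)))"
  proof (rule Lub_least[OF assms])
    fix n have "fle (c n) (c (Suc n))" using assms unfolding fchain_def by blast
    moreover have "fle (c (Suc n)) (Lub (\<lambda>n. c (Suc n)))" using Lub_ub[OF \<open>fchain (\<lambda>n. c (Suc n))\<close>, of n] by simp
    ultimately show "fle (c n) (Lub (\<lambda>n. c (Suc n)))" by (rule fle_trans)
  qed
qed

definition pre :: "(real \<Rightarrow> 's option) \<Rightarrow> ('s,'y) trj \<Rightarrow> ('s,'y) trj" where
  "pre e b = (case b of Ret e' y \<Rightarrow> Ret (cat e e') y | Div e' \<Rightarrow> Div (cat e e'))"

lemma kstar_Ret: "kstar G (Ret e x) = pre e (G x)"
  by (cases "G x") (auto simp: pre_def)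

lemma pre_Ret[simp]: "pre e (Ret e' y) = Ret (cat e e') y" by (simp add: pre_def)
lemma pre_Div[simp]: "pre e (Div e') = Div (cat e e')" by (simp add: pre_def)

lemma isR_pre[simp]: "isR (pre e b) = isR b" by (cases b) (auto simp: pre_def)
lemma tm_pre[simp]: "tm (pre e b) = cat e (tm b)" by (cases b) (auto simp: pre_def)

lemma U_cat: "U (\<lambda>n. cat e (m n)) = cat e (U m)"
  by (rule ext) (simp add: U_def cat_def)

lemma lubT_pre: "lubT (\<lambda>n. pre e (d n)) = pre e (lubT d)"
proof (cases "\<exists>n. isR (d n)")
  case True then show ?thesis unfolding lubT_def by simp
next
  case False
  have "lubT (\<lambda>n. pre e (d n)) = Div (U (\<lambda>n. tm (pre e (d n))))" by (rule lubT_Div) (use False in simp)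
  also have "\<dots> = Div (cat e (U (\<lambda>n. tm (d n))))" by (simp add: U_cat)
  also have "\<dots> = pre e (lubT d)" using lubT_Div[OF False] by simp
  finally show ?thesis .
qed

lemma U_const: "U (\<lambda>n. e) = e"
  by (rule ext) (simp add: U_def)

lemma lubT_const: "lubT (\<lambda>n. a) = a"
  by (cases a) (auto simp: lubT_def U_const)

lemma le_pre: "le a b \<Longrightarrow> le (pre e a) (pre e b)"
  by (cases a) (auto simp: cat_mono)

lemma le_kstar_fun: assumes "\<And>y. le (F y) (G y)" shows "le (kstar F a) (kstar G a)"
proof (cases a)
  case (Ret e x) then show ?thesis by (simp only: kstar_Ret) (rule le_pre[OF assms])
qed simp

lemma Phi_mono: assumes "fle g h" shows "fle (Phi f g) (Phi f h)"
  unfolding fle_def Phi_def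
proof
  fix x
  have "le (case_sum eta g y) (case_sum eta h y)" for y
    using assms by (cases y) (simp_all add: fle_def)
  then show "le (kstar (case_sum eta g) (f x)) (kstar (case_sum eta h) (f x))" by (rule le_kstar_fun)
qed

lemma Phi_Fun: "f \<in> Fun k S \<Longrightarrow> g \<in> Fun k S \<Longrightarrow> Phi f g \<in> Fun k S"
proof -
  assume f: "f \<in> Fun k S" and g: "g \<in> Fun k S"
  have "case_sum eta g \<in> Fun k S" using case_sum_Fun[OF eta_Fun g] .
  moreover have "f x \<in> Hc k S" for x using f by (simp add: Fun_iff)
  ultimately have "kstar (case_sum eta g) (f x) \<in> Hc k S" for x by (rule kstar_Hc)
  then show ?thesis unfolding Phi_def Fun_iff by simp
qed

lemma Phi_cont: "Phi f (Lub c) = Lub (\<lambda>n. Phi f (c n))"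
proof (rule ext)
  fix x show "Phi f (Lub c) x = Lub (\<lambda>n. Phi f (c n)) x"
  proof (cases "f x")
    case (Ret e s)
    then show ?thesis unfolding Phi_def Lub_def Ret kstar_Ret
      by (cases s) (simp_all add: lubT_const lubT_pre)
  qed (simp add: Phi_def Lub_def lubT_const)
qed

definition botF :: "'x \<Rightarrow> ('s,'y) trj" where "botF = (\<lambda>x. Div Map.empty)"

lemma botF_Fun[simp]: "botF \<in> Fun k S"
  by (simp add: botF_def Fun_iff okD_fin_open)

lemma botF_le[simp]: "fle botF g"
  by (simp add: botF_def fle_def)

definition iter :: "('x \<Rightarrow> ('s, 'y + 'x) trj) \<Rightarrow> nat \<Rightarrow> 'x \<Rightarrow> ('s,'y) trj" where
  "iter f n = (Phi f ^^ n) botF"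

lemma iter_Suc: "iter f (Suc n) = Phi f (iter f n)" by (simp add: iter_def)
lemma iter_0: "iter f 0 = botF" by (simp add: iter_def)

lemma iter_Fun: "f \<in> Fun k S \<Longrightarrow> iter f n \<in> Fun k S"
  by (induction n) (simp_all add: iter_0 iter_Suc Phi_Fun)

lemma iter_chain: "fchain (iter f)"
proof -
  have "fle (iter f n) (iter f (Suc n))" for n
    by (induction n) (simp_all add: iter_0 iter_Suc Phi_mono)
  then show ?thesis by (simp add: fchain_def)
qed

lemma iter_le_prefix: "fle (Phi f h) h \<Longrightarrow> fle (Lub (iter f)) h"
proof (rule Lub_least[OF iter_chain])
  fix n assume h: "fle (Phi f h) h"
  show "fle (iter f n) h"
    by (induction n) (simp_all add: iter_0 iter_Suc, metis Phi_mono fle_trans h)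
qed

lemma Lub_iter_fix: "Phi f (Lub (iter f)) = Lub (iter f)"
  unfolding Phi_cont iter_Suc[symmetric] by (rule Lub_shift[OF iter_chain])

lemma is_lfp_Lub: "f \<in> Fun k S \<Longrightarrow> is_lfp k S f (Lub (iter f))"
  unfolding is_lfp_def using Lub_Fun[OF iter_chain iter_Fun] Lub_iter_fix iter_le_prefix
  by (metis fle_refl)

lemma dagger_eq: assumes "f \<in> Fun k S" shows "dagger k S f = Lub (iter f)"
  unfolding dagger_def
proof (rule the_equality)
  show "is_lfp k S f (Lub (iter f))" by (rule is_lfp_Lub[OF assms])
  fix g assume g: "is_lfp k S f g"
  have 1: "fle (Lub (iter f)) g" using g unfolding is_lfp_def by (intro iter_le_prefix) simp
  have 2: "fle g (Lub (iter f))" using g is_lfp_Lub[OF assms] unfolding is_lfp_def by blast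
  show "g = Lub (iter f)" using 1 2 by (rule fle_antisym[rotated])
qed

lemma dagger_prefix: "f \<in> Fun k S \<Longrightarrow> fle (Phi f h) h \<Longrightarrow> fle (dagger k S f) h"
  by (simp add: dagger_eq iter_le_prefix)

lemma dagger_fix: "f \<in> Fun k S \<Longrightarrow> Phi f (dagger k S f) = dagger k S f"
  by (simp add: dagger_eq Lub_iter_fix)

lemma dagger_Fun: "f \<in> Fun k S \<Longrightarrow> dagger k S f \<in> Fun k S"
  by (simp add: dagger_eq Lub_Fun[OF iter_chain iter_Fun])

lemma omega_cont: fixes f :: "'x \<Rightarrow> ('s, 'y + 'x) trj" and S :: "'s set"
  assumes f: "f \<in> Fun k S" shows "omega_continuous k S (Phi f)"
  unfolding omega_continuous_def
proof (intro conjI ballI allI impI)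
  fix c :: "nat \<Rightarrow> 'x \<Rightarrow> ('s,'y) trj" and g
  assume h: "(\<forall>n. c n \<in> Fun k S) \<and> (\<forall>n. fle (c n) (c (Suc n))) \<and> is_lub k S (range c) g"
  then have ch: "fchain c" by (simp add: fchain_def)
  have "g = Lub c" using h Lub_is_lub[OF ch] is_lub_unique by blast
  then have eq: "Phi f g = Lub (\<lambda>n. Phi f (c n))" using Phi_cont by simp
  have ch2: "fchain (\<lambda>n. Phi f (c n))" using ch unfolding fchain_def by (blast intro: Phi_mono)
  have "is_lub k S (range (\<lambda>n. Phi f (c n))) (Lub (\<lambda>n. Phi f (c n)))"
    by (rule Lub_is_lub[OF ch2]) (use h Phi_Fun[OF f] in blast)
  then show "is_lub k S (range (Phi f \<circ> c)) (Phi f g)" by (simp add: eq comp_def)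
next
  fix g :: "'x \<Rightarrow> ('s,'y) trj" assume "g \<in> Fun k S" then show "Phi f g \<in> Fun k S" using Phi_Fun[OF f] by blast
next
  fix g h :: "'x \<Rightarrow> ('s,'y) trj" assume "fle g h" then show "fle (Phi f g) (Phi f h)" by (rule Phi_mono)
qed


lemma Fun_app: "f \<in> Fun k S \<Longrightarrow> f x \<in> Hc k S" by (simp add: Fun_iff)

lemma uniformity:
  assumes f: "f \<in> Fun k S" and g: "g \<in> Fun k S" and eq: "f \<circ> h = Tmap (map_sum id h) \<circ> g"
  shows "dagger k S f \<circ> h = dagger k S g"
proof -
  have it: "iter f n \<circ> h = iter g n" for n
  proof (induction n)
    case 0 show ?case by (simp add: iter_0 botF_def comp_def)
  next
    case (Suc n)
    show ?case
    proof (rule ext)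
      fix z
      have 1: "f (h z) = Tmap (map_sum id h) (g z)" using fun_cong[OF eq, of z] by simp
      have 2: "case_sum eta (iter f n) \<circ> map_sum id h = case_sum eta (iter g n)"
        using Suc by (auto simp: fun_eq_iff split: sum.split)
      have "iter f (Suc n) (h z) = kstar (case_sum eta (iter f n)) (f (h z))"
        by (simp add: iter_Suc Phi_def)
      also have "\<dots> = kstar (case_sum eta (iter f n) \<circ> map_sum id h) (g z)"
        unfolding 1 by (rule kstar_Tmap[OF Fun_app[OF g]])
      also have "\<dots> = iter g (Suc n) z" unfolding 2 by (simp add: iter_Suc Phi_def)
      finally show "(iter f (Suc n) \<circ> h) z = iter g (Suc n) z" by simp
    qed
  qed
  have "Lub (iter f) \<circ> h = Lub (\<lambda>n. iter f n \<circ> h)" by (simp add: Lub_def comp_def fun_eq_iff)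
  then show ?thesis using it dagger_eq[OF f] dagger_eq[OF g] by simp
qed

lemma mix: assumes g: "g \<in> Fun k S" and K: "K \<in> Fun k S"
  shows "kstar (case_sum eta K) \<circ> case_sum (Tmap Inl \<circ> g) (eta \<circ> Inr) = case_sum g K"
proof (rule ext)
  fix s show "(kstar (case_sum eta K) \<circ> case_sum (Tmap Inl \<circ> g) (eta \<circ> Inr)) s = case_sum g K s"
  proof (cases s)
    case (Inl y)
    have "kstar (case_sum eta K) (Tmap Inl (g y)) = kstar (case_sum eta K \<circ> Inl) (g y)"
      by (rule kstar_Tmap[OF Fun_app[OF g]])
    also have "case_sum eta K \<circ> Inl = eta" by (simp add: fun_eq_iff)
    also have "kstar eta (g y) = g y" by (rule kstar_eta_right[OF Fun_app[OF g]])
    finally show ?thesis using Inl by simp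
  next
    case (Inr x)
    have "case_sum eta K (Inr x) \<in> Hc k S" using Fun_app[OF K] by simp
    then show ?thesis using kstar_eta_left[of "case_sum eta K" "Inr x" k S] Inr by simp
  qed
qed

lemma mix_Fun: "g \<in> Fun k S \<Longrightarrow> case_sum (Tmap Inl \<circ> g) (eta \<circ> Inr) \<in> Fun k S"
  by (intro case_sum_Fun Tmap_comp_Fun comp_Fun eta_Fun)

lemma Phi_nat: assumes f: "f \<in> Fun k S" and g: "g \<in> Fun k S" and K: "K \<in> Fun k S"
  shows "Phi (kstar (case_sum (Tmap Inl \<circ> g) (eta \<circ> Inr)) \<circ> f) K = (\<lambda>x. kstar (case_sum g K) (f x))"
proof (rule ext)
  fix x
  have "Phi (kstar (case_sum (Tmap Inl \<circ> g) (eta \<circ> Inr)) \<circ> f) K x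
     = kstar (case_sum eta K) (kstar (case_sum (Tmap Inl \<circ> g) (eta \<circ> Inr)) (f x))"
    by (simp add: Phi_def)
  also have "\<dots> = kstar (kstar (case_sum eta K) \<circ> case_sum (Tmap Inl \<circ> g) (eta \<circ> Inr)) (f x)"
    by (rule kstar_assoc[OF mix_Fun[OF g] Fun_app[OF f]])
  also have "\<dots> = kstar (case_sum g K) (f x)" by (simp only: mix[OF g K])
  finally show "Phi (kstar (case_sum (Tmap Inl \<circ> g) (eta \<circ> Inr)) \<circ> f) K x = kstar (case_sum g K) (f x)" .
qed

lemma kstar_Phi: assumes f: "f \<in> Fun k S" and g: "g \<in> Fun k S" and G: "G \<in> Fun k S"
  shows "kstar g \<circ> Phi f G = (\<lambda>x. kstar (case_sum g (kstar g \<circ> G)) (f x))"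
proof (rule ext)
  fix x
  have "(kstar g \<circ> Phi f G) x = kstar g (kstar (case_sum eta G) (f x))" by (simp add: Phi_def)
  also have "\<dots> = kstar (kstar g \<circ> case_sum eta G) (f x)"
    by (rule kstar_assoc[OF case_sum_Fun[OF eta_Fun G] Fun_app[OF f]])
  also have "kstar g \<circ> case_sum eta G = case_sum g (kstar g \<circ> G)"
    using kstar_eta_left[of g _ k S, OF Fun_app[OF g]] by (auto simp: fun_eq_iff split: sum.split)
  finally show "(kstar g \<circ> Phi f G) x = kstar (case_sum g (kstar g \<circ> G)) (f x)" .
qed

lemma kstar_lubT: assumes d: "chainT d" "\<And>n. d n \<in> Hc k S"
  shows "kstar g (lubT d) = lubT (\<lambda>n. kstar g (d n))"
proof (rule le_antisym)
  have L: "lubT d \<in> Hc k S" by (rule lubT_Hc[OF d])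
  have ch: "chainT (\<lambda>n. kstar g (d n))"
    using d kstar_mono unfolding chainT_def by blast
  show "le (lubT (\<lambda>n. kstar g (d n))) (kstar g (lubT d))"
    by (rule lubT_least[OF ch]) (rule kstar_mono[OF lubT_ub[OF d(1)] L])
  show "le (kstar g (lubT d)) (lubT (\<lambda>n. kstar g (d n)))"
  proof (cases "\<exists>j. isR (d j)")
    case True
    then obtain j where j: "isR (d j)" by blast
    show ?thesis unfolding lubT_Ret[OF d(1) j] using lubT_ub[OF ch, of j] by simp
  next
    case False
    have dn: "d n = Div (tm (d n))" for n using False by (cases "d n") (auto dest: spec[of _ n])
    have "tm (d n) \<subseteq>\<^sub>m tm (lubT (\<lambda>n. kstar g (d n)))" for n
    proof -
      have "le (kstar g (d n)) (lubT (\<lambda>n. kstar g (d n)))" by (rule lubT_ub[OF ch])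
      moreover have "kstar g (d n) = Div (tm (d n))" by (subst dn) simp
      ultimately show ?thesis by simp
    qed
    then have "U (\<lambda>n. tm (d n)) \<subseteq>\<^sub>m tm (lubT (\<lambda>n. kstar g (d n)))"
      by (rule U_le[OF chainT_compat[OF d(1)]])
    then show ?thesis unfolding lubT_Div[OF False] by simp
  qed
qed

lemma naturality:
  assumes f: "f \<in> Fun k S" and g: "g \<in> Fun k S"
  shows "kstar g \<circ> dagger k S f = dagger k S (kstar (case_sum (Tmap Inl \<circ> g) (eta \<circ> Inr)) \<circ> f)"
proof -
  define f' where "f' = kstar (case_sum (Tmap Inl \<circ> g) (eta \<circ> Inr)) \<circ> f"
  have f': "f' \<in> Fun k S" unfolding f'_def by (rule kstar_comp_Fun[OF mix_Fun[OF g] f])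
  have it: "kstar g \<circ> iter f n = iter f' n" for n
  proof (induction n)
    case 0 show ?case by (simp add: iter_0 botF_def comp_def)
  next
    case (Suc n)
    have "kstar g \<circ> iter f (Suc n) = (\<lambda>x. kstar (case_sum g (kstar g \<circ> iter f n)) (f x))"
      unfolding iter_Suc by (rule kstar_Phi[OF f g iter_Fun[OF f]])
    also have "\<dots> = Phi f' (kstar g \<circ> iter f n)"
      unfolding f'_def by (rule Phi_nat[OF f g kstar_comp_Fun[OF g iter_Fun[OF f]], symmetric])
    finally show ?case using Suc by (simp add: iter_Suc)
  qed
  have "kstar g \<circ> Lub (iter f) = Lub (\<lambda>n. kstar g \<circ> iter f n)"
  proof (rule ext)
    fix x
    have "kstar g (lubT (\<lambda>n. iter f n x)) = lubT (\<lambda>n. kstar g (iter f n x))"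
      by (rule kstar_lubT[OF fchain_chainT[OF iter_chain] Fun_app[OF iter_Fun[OF f]]])
    then show "(kstar g \<circ> Lub (iter f)) x = Lub (\<lambda>n. kstar g \<circ> iter f n) x"
      by (simp add: Lub_def)
  qed
  then show ?thesis using it dagger_eq[OF f] dagger_eq[OF f'] unfolding f'_def by simp
qed

lemma Phi_codiag: assumes f: "f \<in> Fun k S"
  shows "Phi (Tmap (case_sum id Inr) \<circ> f) K = (\<lambda>x. kstar (case_sum (case_sum eta K) K) (f x))"
proof (rule ext)
  fix x
  have "Phi (Tmap (case_sum id Inr) \<circ> f) K x = kstar (case_sum eta K \<circ> case_sum id Inr) (f x)"
    unfolding Phi_def comp_def by (rule kstar_Tmap[OF Fun_app[OF f], unfolded comp_def])
  also have "case_sum eta K \<circ> case_sum id Inr = case_sum (case_sum eta K) K"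
    by (auto simp: fun_eq_iff split: sum.split)
  finally show "Phi (Tmap (case_sum id Inr) \<circ> f) K x = kstar (case_sum (case_sum eta K) K) (f x)" .
qed

lemma codiagonal: assumes f: "f \<in> Fun k S"
  shows "dagger k S (Tmap (case_sum id Inr) \<circ> f) = dagger k S (dagger k S f)"
proof -
  define F where "F = dagger k S f"
  define h where "h = Tmap (case_sum id Inr) \<circ> f"
  have F: "F \<in> Fun k S" unfolding F_def by (rule dagger_Fun[OF f])
  have h: "h \<in> Fun k S" unfolding h_def by (rule Tmap_comp_Fun[OF f])
  define D where "D = dagger k S h"
  define E where "E = dagger k S F"
  have D: "D \<in> Fun k S" unfolding D_def by (rule dagger_Fun[OF h])
  have E: "E \<in> Fun k S" unfolding E_def by (rule dagger_Fun[OF F])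
  have gD: "case_sum eta D \<in> Fun k S" by (rule case_sum_Fun[OF eta_Fun D])
  have gE: "case_sum eta E \<in> Fun k S" by (rule case_sum_Fun[OF eta_Fun E])
  have PhD: "Phi h D = D" unfolding D_def by (rule dagger_fix[OF h])
  have PhE: "Phi F E = E" unfolding E_def by (rule dagger_fix[OF F])
  have fD: "Phi F D = kstar (case_sum eta D) \<circ> F" by (simp add: Phi_def fun_eq_iff)
  have fE: "Phi F E = kstar (case_sum eta E) \<circ> F" by (simp add: Phi_def fun_eq_iff)
  define f1 where "f1 = kstar (case_sum (Tmap Inl \<circ> case_sum eta D) (eta \<circ> Inr)) \<circ> f"
  have f1: "f1 \<in> Fun k S" unfolding f1_def by (rule kstar_comp_Fun[OF mix_Fun[OF gD] f])
  have n1: "Phi F D = dagger k S f1" unfolding fD unfolding F_def f1_def by (rule naturality[OF f gD])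
  have "Phi f1 D = D" unfolding f1_def Phi_nat[OF f gD D]
    using PhD unfolding h_def Phi_codiag[OF f] .
  then have "fle (dagger k S f1) D" by (intro dagger_prefix[OF f1]) simp
  then have "fle E D" unfolding E_def using n1 by (intro dagger_prefix[OF F]) simp
  define f2 where "f2 = kstar (case_sum (Tmap Inl \<circ> case_sum eta E) (eta \<circ> Inr)) \<circ> f"
  have f2: "f2 \<in> Fun k S" unfolding f2_def by (rule kstar_comp_Fun[OF mix_Fun[OF gE] f])
  have n2: "Phi F E = dagger k S f2" unfolding fE unfolding F_def f2_def by (rule naturality[OF f gE])
  then have "E = dagger k S f2" using PhE by simp
  then have "Phi f2 E = E" using dagger_fix[OF f2] by simp
  then have "Phi h E = E" unfolding f2_def Phi_nat[OF f gE E] h_def Phi_codiag[OF f] .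
  then have "fle D E" unfolding D_def by (intro dagger_prefix[OF h]) simp
  with \<open>fle E D\<close> have "D = E" by (intro fle_antisym)
  then show ?thesis unfolding D_def E_def h_def F_def .
qed

theorem theorem2:
  fixes k :: variant and S :: "'s set"
  shows
   \<comment> \<open>monad laws\<close>
   "(\<forall>x::'x. (eta x :: ('s,'x) trj) \<in> Hc k S)
  \<and> (\<forall>(f :: 'x \<Rightarrow> ('s,'y) trj) a. f \<in> Fun k S \<and> a \<in> Hc k S \<longrightarrow> kstar f a \<in> Hc k S)
  \<and> (\<forall>(f :: 'x \<Rightarrow> ('s,'y) trj) x. f \<in> Fun k S \<longrightarrow> kstar f (eta x) = f x)
  \<and> (\<forall>a :: ('s,'x) trj. a \<in> Hc k S \<longrightarrow> kstar eta a = a)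
  \<and> (\<forall>(f :: 'x \<Rightarrow> ('s,'y) trj) (g :: 'y \<Rightarrow> ('s,'z) trj) a.
        f \<in> Fun k S \<and> g \<in> Fun k S \<and> a \<in> Hc k S \<longrightarrow>
        kstar g (kstar f a) = kstar (kstar g \<circ> f) a)
   \<comment> \<open>iteration: Phi f is omega-continuous and has a least fixpoint\<close>
  \<and> (\<forall>f :: 'x \<Rightarrow> ('s,'y + 'x) trj. f \<in> Fun k S \<longrightarrow>
        omega_continuous k S (Phi f) \<and> (\<exists>g. is_lfp k S f g))
   \<comment> \<open>fixpoint\<close>
  \<and> (\<forall>f :: 'x \<Rightarrow> ('s,'y + 'x) trj. f \<in> Fun k S \<longrightarrow>
        kstar (case_sum eta (dagger k S f)) \<circ> f = dagger k S f)
   \<comment> \<open>naturality\<close>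
  \<and> (\<forall>(f :: 'x \<Rightarrow> ('s,'y + 'x) trj) (g :: 'y \<Rightarrow> ('s,'z) trj). f \<in> Fun k S \<and> g \<in> Fun k S \<longrightarrow>
        kstar g \<circ> dagger k S f
        = dagger k S (kstar (case_sum (Tmap Inl \<circ> g) (eta \<circ> Inr)) \<circ> f))
   \<comment> \<open>codiagonal\<close>
  \<and> (\<forall>f :: 'x \<Rightarrow> ('s,('y + 'x) + 'x) trj. f \<in> Fun k S \<longrightarrow>
        dagger k S (Tmap (case_sum id Inr) \<circ> f) = dagger k S (dagger k S f))
   \<comment> \<open>uniformity\<close>
  \<and> (\<forall>(f :: 'x \<Rightarrow> ('s,'y + 'x) trj) (g :: 'z \<Rightarrow> ('s,'y + 'z) trj) (h :: 'z \<Rightarrow> 'x).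
        f \<in> Fun k S \<and> g \<in> Fun k S \<and> f \<circ> h = Tmap (map_sum id h) \<circ> g \<longrightarrow>
        dagger k S f \<circ> h = dagger k S g)"
proof (intro conjI allI impI)
  show "\<And>x. eta x \<in> Hc k S" by simp
next
  fix f :: "'x \<Rightarrow> ('s,'y) trj" and a :: "('s,'x) trj" assume "f \<in> Fun k S \<and> a \<in> Hc k S"
  then show "kstar f a \<in> Hc k S" using kstar_Hc by blast
next
  fix f :: "'x \<Rightarrow> ('s,'y) trj" and x assume "f \<in> Fun k S"
  then show "kstar f (eta x) = f x" by (intro kstar_eta_left Fun_app)
next
  fix a :: "('s,'x) trj" assume "a \<in> Hc k S"
  then show "kstar eta a = a" by (rule kstar_eta_right)
next
  fix f :: "'x \<Rightarrow> ('s,'y) trj" and g :: "'y \<Rightarrow> ('s,'z) trj" and a :: "('s,'x) trj"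
  assume "f \<in> Fun k S \<and> g \<in> Fun k S \<and> a \<in> Hc k S"
  then show "kstar g (kstar f a) = kstar (kstar g \<circ> f) a" using kstar_assoc by blast
next
  fix f :: "'x \<Rightarrow> ('s,'y + 'x) trj" assume "f \<in> Fun k S"
  then show "omega_continuous k S (Phi f)" by (rule omega_cont)
next
  fix f :: "'x \<Rightarrow> ('s,'y + 'x) trj" assume "f \<in> Fun k S"
  then show "\<exists>g. is_lfp k S f g" using is_lfp_Lub by blast
next
  fix f :: "'x \<Rightarrow> ('s,'y + 'x) trj" assume f: "f \<in> Fun k S"
  show "kstar (case_sum eta (dagger k S f)) \<circ> f = dagger k S f"
    using dagger_fix[OF f] by (simp add: Phi_def comp_def)
next
  fix f :: "'x \<Rightarrow> ('s,'y + 'x) trj" and g :: "'y \<Rightarrow> ('s,'z) trj"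
  assume "f \<in> Fun k S \<and> g \<in> Fun k S"
  then show "kstar g \<circ> dagger k S f
        = dagger k S (kstar (case_sum (Tmap Inl \<circ> g) (eta \<circ> Inr)) \<circ> f)"
    using naturality by blast
next
  fix f :: "'x \<Rightarrow> ('s,('y + 'x) + 'x) trj" assume "f \<in> Fun k S"
  then show "dagger k S (Tmap (case_sum id Inr) \<circ> f) = dagger k S (dagger k S f)"
    by (rule codiagonal)
next
  fix f :: "'x \<Rightarrow> ('s,'y + 'x) trj" and g :: "'z \<Rightarrow> ('s,'y + 'z) trj" and h :: "'z \<Rightarrow> 'x"
  assume "f \<in> Fun k S \<and> g \<in> Fun k S \<and> f \<circ> h = Tmap (map_sum id h) \<circ> g"
  then show "dagger k S f \<circ> h = dagger k S g" using uniformity by blast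
qed

end
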